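(* The AMC (allocating marginal contributions) policy is temporal Nash stable.
   Context: Players: a finite set $N=\{a_1,\dots,a_n\}$. A characteristic function is $v:2^N\to\mathbb{R}_{\ge 0}$ with $v(\emptyset)=0$, monotone and bounded: $\mathsf{min}\le v(S)\le v(T)\le\mathsf{max}$ for all nonempty $S\subseteq T\subseteq N$, for fixed constants $0<\mathsf{min}\le\mathsf{max}$. Online process: an arrival order is a permutation $\pi=(\pi_1,\dots,\pi_n)$ of $N$; player $\pi_t$ arrives at time $t$; $\pi_{\prec t}$ is the set of players arriving before time $t$ and $\pi^{-1}(i)$ the arrival time of $i$. For $S\subseteq N$, $\pi_{|S}$ denotes the players of $S$ in the relative order of $\pi$. Let $C^{t-1}$ be the coalition structure of players arrived before time $t$ ($C^0=\emptyset$). At time $t$, player $\pi_t$ either joins an existing coalition $S\in C^{t-1}$ or forms $\{\pi_t\}$ (choice $S=\emptyset$); decisions are never revised. AMC policy: for a coalition $S$ and $i\in S$, $\varphi_i(S,\pi_{|S})=v((\pi_{\prec\pi^{-1}(i)}\cap S)\cup\{i\})-v(\pi_{\prec\pi^{-1}(i)}\cap S)$. Greedy players: $\pi_t$ chooses $S\in C^{t-1}\cup\{\emptyset\}$ maximizing $\varphi_{\pi_t}(S\cup\{\pi_t\},\pi_{|S\cup\{\pi_t\}})$ (predetermined tie-breaking). $C_g^t$ is the structure after time $t$ and $C_g=C_g^n$ the final one. For a time $t$, $\overline{C}_g^{t}\subseteq C_g$ denotes the set of coalitions of the final structure $C_g$ whose first-arriving member arrived at time at most $t$. Temporal Nash stability: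 for every $v$ and $\pi$, every $S\in C_g$ and every $i\in S$, there is no $S'\in\overline{C}_g^{\pi^{-1}(i)-1}\cup\{\emptyset\}$ with $\varphi_i(S'\cup\{i\},\pi_{|S'\cup\{i\}})>\varphi_i(S,\pi_{|S})$. *)

theory Defs
  imports Complex_Main
begin

definition arr :: "'a list \<Rightarrow> 'a \<Rightarrow> nat" where
  "arr \<pi> i = (LEAST k. k < length \<pi> \<and> \<pi> ! k = i)"

text \<open>Arrival order: a duplicate-free list \<pi>; the arrival time of player i is
  arr \<pi> i + 1 (list positions are 0-based).\<close>

definition arrived_before :: "'a list \<Rightarrow> 'a \<Rightarrow> 'a set" where
  "arrived_before \<pi> i = {j \<in> set \<pi>. arr \<pi> j < arr \<pi> i}"

definition amc :: "('a set \<Rightarrow> real) \<Rightarrow> 'a list \<Rightarrow> 'a \<Rightarrow> 'a set \<Rightarrow> real" where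
  "amc v \<pi> i S = v ((arrived_before \<pi> i \<inter> S) \<union> {i}) - v (arrived_before \<pi> i \<inter> S)"

text \<open>greedy_struct v \<pi> t C: C is a coalition structure reachable after the first t arrivals
  when every arriving player greedily chooses a maximising option (any tie-breaking).\<close>
inductive greedy_struct :: "('a set \<Rightarrow> real) \<Rightarrow> 'a list \<Rightarrow> nat \<Rightarrow> 'a set set \<Rightarrow> bool"
  for v \<pi> where
  init: "greedy_struct v \<pi> 0 {}"
| step: "\<lbrakk> greedy_struct v \<pi> t C; t < length \<pi>; S \<in> C \<union> {{}};
           \<forall>S' \<in> C \<union> {{}}. amc v \<pi> (\<pi> ! t) (S' \<union> {\<pi> ! t}) \<le> amc v \<pi> (\<pi> ! t) (S \<union> {\<pi> ! t}) \<rbrakk>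
         \<Longrightarrow> greedy_struct v \<pi> (Suc t) (insert (S \<union> {\<pi> ! t}) (C - {S}))"

definition first_arrival :: "'a list \<Rightarrow> 'a set \<Rightarrow> nat" where
  "first_arrival \<pi> S = Min (arr \<pi> ` S)"

end

theory Submission
  imports Defs
begin

lemma arr_nth:
  assumes "distinct \<pi>" "t < length \<pi>"
  shows "arr \<pi> (\<pi> ! t) = t"
  unfolding arr_def
proof (rule Least_equality)
  show "t < length \<pi> \<and> \<pi> ! t = \<pi> ! t" using assms by simp
next
  fix y assume "y < length \<pi> \<and> \<pi> ! y = \<pi> ! t"
  then have "y = t" using assms nth_eq_iff_index_eq by blast
  then show "t \<le> y" by simp
qed

lemma amc_add_late:
  assumes "arr \<pi> i < arr \<pi> x"
  shows "amc v \<pi> i (A \<union> {x}) = amc v \<pi> i A"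
proof -
  have "x \<notin> arrived_before \<pi> i" using assms unfolding arrived_before_def by auto
  then have "arrived_before \<pi> i \<inter> (A \<union> {x}) = arrived_before \<pi> i \<inter> A" by auto
  then show ?thesis unfolding amc_def by simp
qed

lemma fa_insert:
  assumes "finite S0" "S0 \<noteq> {}"
  shows "first_arrival \<pi> (S0 \<union> {x}) = min (first_arrival \<pi> S0) (arr \<pi> x)"
  using assms unfolding first_arrival_def by (simp add: min.commute)

lemma invariant:
  assumes "greedy_struct v \<pi> t C" "distinct \<pi>"
  shows "(\<forall>S\<in>C. finite S \<and> (\<forall>j\<in>S. arr \<pi> j < t)) \<and>
    (\<forall>S\<in>C. \<forall>i\<in>S. \<forall>S'. ((S'\<in>C \<and> first_arrival \<pi> S' < arr \<pi> i) \<or> S'={}) \<longrightarrow>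
       amc v \<pi> i (S'\<union>{i}) \<le> amc v \<pi> i S)"
  using assms(1)
proof (induction rule: greedy_struct.induct)
  case init
  then show ?case by simp
next
  case (step t C S0)
  define x where "x = \<pi> ! t"
  have ax: "arr \<pi> x = t" using arr_nth[OF assms(2) step.hyps(2)] x_def by simp
  have S0fin: "finite S0" and S0arr: "\<forall>j\<in>S0. arr \<pi> j < t"
    using step.IH step.hyps(3) by auto
  have part1: "\<forall>S\<in>insert (S0 \<union> {x}) (C - {S0}). finite S \<and> (\<forall>j\<in>S. arr \<pi> j < Suc t)"
  proof
    fix S assume "S \<in> insert (S0 \<union> {x}) (C - {S0})"
    then consider "S = S0 \<union> {x}" | "S \<in> C" by blast
    then show "finite S \<and> (\<forall>j\<in>S. arr \<pi> j < Suc t)"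
    proof cases
      case 1 then show ?thesis using S0fin S0arr ax by auto
    next
      case 2
      then have "finite S" "\<forall>j\<in>S. arr \<pi> j < t" using step.IH by blast+
      then show ?thesis by auto
    qed
  qed
  have part2: "amc v \<pi> i (S'\<union>{i}) \<le> amc v \<pi> i S"
    if S: "S \<in> insert (S0 \<union> {x}) (C - {S0})" and iS: "i \<in> S"
      and S': "(S'\<in>insert (S0 \<union> {x}) (C - {S0}) \<and> first_arrival \<pi> S' < arr \<pi> i) \<or> S'={}"
    for S i S'
  proof (cases "i = x")
    case True
    have SS: "S = S0 \<union> {x}"
    proof (rule ccontr)
      assume "S \<noteq> S0 \<union> {x}"
      then have "S \<in> C" using S by blast
      then have "arr \<pi> i < t" using step.IH iS by blast
      then show False using True ax by simp
    qed
    have "S' \<in> C \<union> {{}} \<or> S' = S0 \<union> {x}" using S' by auto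
    then show ?thesis
    proof
      assume "S' \<in> C \<union> {{}}"
      then show ?thesis using step.hyps(4) SS True x_def by auto
    next
      assume "S' = S0 \<union> {x}"
      then show ?thesis using SS True by simp
    qed
  next
    case False
    obtain S1 where S1: "S1 \<in> C" "i \<in> S1" "S = S1 \<or> S = S1 \<union> {x}"
      using S iS False step.hyps(3) by auto
    have ai: "arr \<pi> i < t" using step.IH S1 by blast
    have eqS: "amc v \<pi> i S = amc v \<pi> i S1"
      using S1(3) amc_add_late[of \<pi> i x v S1] ai ax by auto
    have IH2: "\<And>S''. (S''\<in>C \<and> first_arrival \<pi> S'' < arr \<pi> i) \<or> S''={} \<Longrightarrow>
        amc v \<pi> i (S''\<union>{i}) \<le> amc v \<pi> i S1"
      using step.IH S1 by blast
    show ?thesis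
    proof (cases "S' = {}")
      case True then show ?thesis using IH2 eqS by simp
    next
      case ne: False
      then have S'in: "S' \<in> insert (S0 \<union> {x}) (C - {S0})" and fa: "first_arrival \<pi> S' < arr \<pi> i"
        using S' by auto
      show ?thesis
      proof (cases "S' = S0 \<union> {x}")
        case True
        have e: "amc v \<pi> i (S' \<union> {i}) = amc v \<pi> i (S0 \<union> {i})"
          using True amc_add_late[of \<pi> i x v "S0 \<union> {i}"] ai ax
          by (simp add: Un_ac)
        show ?thesis
        proof (cases "S0 = {}")
          case True
          then show ?thesis using e IH2[of "{}"] eqS by simp
        next
          case False
          then have "S0 \<in> C" using step.hyps(3) by auto
          moreover have "first_arrival \<pi> S0 < arr \<pi> i"
            using fa True fa_insert[OF S0fin False, of \<pi> x] ax ai by auto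
          ultimately show ?thesis using e IH2[of S0] eqS by simp
        qed
      next
        case False
        then have "S' \<in> C" using S'in by auto
        then show ?thesis using IH2[of S'] fa eqS by simp
      qed
    qed
  qed
  show ?case
    unfolding x_def[symmetric]
  proof (intro conjI)
    show "\<forall>S\<in>insert (S0 \<union> {x}) (C - {S0}). finite S \<and> (\<forall>j\<in>S. arr \<pi> j < Suc t)"
      by (rule part1)
    show "\<forall>S\<in>insert (S0 \<union> {x}) (C - {S0}). \<forall>i\<in>S. \<forall>S'.
       (S' \<in> insert (S0 \<union> {x}) (C - {S0}) \<and> first_arrival \<pi> S' < arr \<pi> i \<or> S' = {}) \<longrightarrow>
       amc v \<pi> i (S' \<union> {i}) \<le> amc v \<pi> i S"
      using part2 by (intro ballI allI impI) simp
  qed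
qed

theorem proposition3:
  fixes N :: "'a set" and \<pi> :: "'a list" and v :: "'a set \<Rightarrow> real"
    and mn mx :: real and Cg :: "'a set set"
  assumes "finite N"
    and "distinct \<pi>" and "set \<pi> = N"
    and "v {} = 0"
    and "\<forall>S. S \<subseteq> N \<longrightarrow> v S \<ge> 0"
    and "0 < mn" and "mn \<le> mx"
    and "\<forall>S T. S \<noteq> {} \<and> S \<subseteq> T \<and> T \<subseteq> N \<longrightarrow> mn \<le> v S \<and> v S \<le> v T \<and> v T \<le> mx"
    and "greedy_struct v \<pi> (length \<pi>) Cg"
  shows "\<forall>S \<in> Cg. \<forall>i \<in> S. \<forall>S'.
           ((S' \<in> Cg \<and> first_arrival \<pi> S' < arr \<pi> i) \<or> S' = {}) \<longrightarrow>
           \<not> (amc v \<pi> i (S' \<union> {i}) > amc v \<pi> i S)"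
  using invariant[OF assms(9) assms(2)] by (simp add: not_less)

end
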